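(* Let $G$ be the central product of normal subgroups $H,K$ ($G=HK$, $[H,K]=1$), $Z=H'\cap K'$, and $D$ a divisible abelian group with trivial action. Then $\operatorname{Hom}(Z,D)$ embeds in $\operatorname{H}^2(H/Z,D)\oplus\operatorname{H}^2(K/Z,D)$.
   Context: $X'$ is the commutator subgroup of $X$; $\operatorname{H}^2(X,D)$ is second cohomology with trivial coefficients. *)

theory Defs
  imports "HOL-Algebra.Algebra"
begin

definition divisible_group :: "('d, 'n) monoid_scheme \<Rightarrow> bool" where
  "divisible_group D \<longleftrightarrow> comm_group D \<and>
     (\<forall>d \<in> carrier D. \<forall>n::nat. n > 0 \<longrightarrow> (\<exists>x \<in> carrier D. x [^]\<^bsub>D\<^esub> n = d))"

definition hom_group :: "('a, 'c) monoid_scheme \<Rightarrow> ('d, 'n) monoid_scheme \<Rightarrow> ('a \<Rightarrow> 'd) monoid" where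
  "hom_group A D =
     \<lparr> carrier = hom A D \<inter> extensional (carrier A),
       monoid.mult = (\<lambda>f g. \<lambda>x \<in> carrier A. f x \<otimes>\<^bsub>D\<^esub> g x),
       one = (\<lambda>x \<in> carrier A. \<one>\<^bsub>D\<^esub>) \<rparr>"

definition cocycles2 :: "('a, 'c) monoid_scheme \<Rightarrow> ('d, 'n) monoid_scheme \<Rightarrow> ('a \<times> 'a \<Rightarrow> 'd) set" where
  "cocycles2 Q D = {f. f \<in> carrier Q \<times> carrier Q \<rightarrow>\<^sub>E carrier D \<and>
     (\<forall>x \<in> carrier Q. \<forall>y \<in> carrier Q. \<forall>z \<in> carrier Q.
        f (y, z) \<otimes>\<^bsub>D\<^esub> f (x, y \<otimes>\<^bsub>Q\<^esub> z) = f (x \<otimes>\<^bsub>Q\<^esub> y, z) \<otimes>\<^bsub>D\<^esub> f (x, y))}"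

definition coboundaries2 :: "('a, 'c) monoid_scheme \<Rightarrow> ('d, 'n) monoid_scheme \<Rightarrow> ('a \<times> 'a \<Rightarrow> 'd) set" where
  "coboundaries2 Q D = {f. \<exists>g \<in> carrier Q \<rightarrow>\<^sub>E carrier D.
     f = restrict (\<lambda>p. g (snd p) \<otimes>\<^bsub>D\<^esub> inv\<^bsub>D\<^esub> (g (fst p \<otimes>\<^bsub>Q\<^esub> snd p)) \<otimes>\<^bsub>D\<^esub> g (fst p))
                  (carrier Q \<times> carrier Q)}"

definition cocycle_group :: "('a, 'c) monoid_scheme \<Rightarrow> ('d, 'n) monoid_scheme \<Rightarrow> ('a \<times> 'a \<Rightarrow> 'd) monoid" where
  "cocycle_group Q D =
     \<lparr> carrier = cocycles2 Q D,
       monoid.mult = (\<lambda>f g. restrict (\<lambda>p. f p \<otimes>\<^bsub>D\<^esub> g p) (carrier Q \<times> carrier Q)),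
       one = restrict (\<lambda>p. \<one>\<^bsub>D\<^esub>) (carrier Q \<times> carrier Q) \<rparr>"

definition H2 :: "('a, 'c) monoid_scheme \<Rightarrow> ('d, 'n) monoid_scheme \<Rightarrow> ('a \<times> 'a \<Rightarrow> 'd) set monoid" where
  "H2 Q D = cocycle_group Q D Mod coboundaries2 Q D"

end

theory Submission
  imports Defs
begin


lemma (in comm_group) L1: "a \<in> carrier G \<Longrightarrow> b \<in> carrier G \<Longrightarrow> c \<in> carrier G \<Longrightarrow> d \<in> carrier G \<Longrightarrow> e \<in> carrier G \<Longrightarrow>
  a \<otimes> inv b \<otimes> c \<otimes> (b \<otimes> inv d \<otimes> e) = a \<otimes> c \<otimes> e \<otimes> inv d"
proof -
  assume *: "a \<in> carrier G" "b \<in> carrier G" "c \<in> carrier G" "d \<in> carrier G" "e \<in> carrier G"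
  have "a \<otimes> inv b \<otimes> c \<otimes> (b \<otimes> inv d \<otimes> e) = (a \<otimes> c \<otimes> e \<otimes> inv d) \<otimes> (inv b \<otimes> b)"
    using * by (simp only: m_assoc m_comm m_lcomm inv_closed m_closed)
  also have "\<dots> = a \<otimes> c \<otimes> e \<otimes> inv d" using * by simp
  finally show ?thesis .
qed
lemma (in comm_group) L2: "a \<in> carrier G \<Longrightarrow> b \<in> carrier G \<Longrightarrow> c \<in> carrier G \<Longrightarrow> d \<in> carrier G \<Longrightarrow> e \<in> carrier G \<Longrightarrow>
  a \<otimes> inv d \<otimes> b \<otimes> (c \<otimes> inv b \<otimes> e) = a \<otimes> c \<otimes> e \<otimes> inv d"
proof -
  assume *: "a \<in> carrier G" "b \<in> carrier G" "c \<in> carrier G" "d \<in> carrier G" "e \<in> carrier G"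
  have "a \<otimes> inv d \<otimes> b \<otimes> (c \<otimes> inv b \<otimes> e) = (a \<otimes> c \<otimes> e \<otimes> inv d) \<otimes> (inv b \<otimes> b)"
    using * by (simp only: m_assoc m_comm m_lcomm inv_closed m_closed)
  also have "\<dots> = a \<otimes> c \<otimes> e \<otimes> inv d" using * by simp
  finally show ?thesis .
qed
lemma (in comm_group) L3: "a \<in> carrier G \<Longrightarrow> b \<in> carrier G \<Longrightarrow> c \<in> carrier G \<Longrightarrow> d \<in> carrier G \<Longrightarrow> e \<in> carrier G \<Longrightarrow> f \<in> carrier G \<Longrightarrow>
  a \<otimes> inv b \<otimes> c \<otimes> (d \<otimes> inv e \<otimes> f) = (a \<otimes> d) \<otimes> inv (b \<otimes> e) \<otimes> (c \<otimes> f)"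
  by (simp add: inv_mult m_ac)

lemma cocycle_group_comm:
  assumes Q: "monoid Q" and D: "comm_group D"
  shows "comm_group (cocycle_group Q D)"
proof -
  interpret Q: monoid Q by (rule Q)
  interpret D: comm_group D by (rule D)
  show ?thesis
  proof (rule comm_groupI)
    fix f g assume f: "f \<in> carrier (cocycle_group Q D)" and g: "g \<in> carrier (cocycle_group Q D)"
    have fE: "f \<in> carrier Q \<times> carrier Q \<rightarrow>\<^sub>E carrier D" and gE: "g \<in> carrier Q \<times> carrier Q \<rightarrow>\<^sub>E carrier D"
      using f g by (auto simp: cocycle_group_def cocycles2_def)
    have fc: "\<And>x y z. x \<in> carrier Q \<Longrightarrow> y \<in> carrier Q \<Longrightarrow> z \<in> carrier Q \<Longrightarrow>
        f (y, z) \<otimes>\<^bsub>D\<^esub> f (x, y \<otimes>\<^bsub>Q\<^esub> z) = f (x \<otimes>\<^bsub>Q\<^esub> y, z) \<otimes>\<^bsub>D\<^esub> f (x, y)"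
      using f by (auto simp: cocycle_group_def cocycles2_def)
    have gc: "\<And>x y z. x \<in> carrier Q \<Longrightarrow> y \<in> carrier Q \<Longrightarrow> z \<in> carrier Q \<Longrightarrow>
        g (y, z) \<otimes>\<^bsub>D\<^esub> g (x, y \<otimes>\<^bsub>Q\<^esub> z) = g (x \<otimes>\<^bsub>Q\<^esub> y, z) \<otimes>\<^bsub>D\<^esub> g (x, y)"
      using g by (auto simp: cocycle_group_def cocycles2_def)
    show "f \<otimes>\<^bsub>cocycle_group Q D\<^esub> g \<in> carrier (cocycle_group Q D)"
      unfolding cocycle_group_def cocycles2_def
    proof (simp only: partial_object.simps monoid.simps mem_Collect_eq, intro conjI ballI)
      show "(\<lambda>p\<in>carrier Q \<times> carrier Q. f p \<otimes>\<^bsub>D\<^esub> g p) \<in> carrier Q \<times> carrier Q \<rightarrow>\<^sub>E carrier D"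
        using fE gE by (auto simp: PiE_def Pi_def)
    next
      fix x y z assume xyz: "x \<in> carrier Q" "y \<in> carrier Q" "z \<in> carrier Q"
      have c: "f (a, b) \<in> carrier D" "g (a, b) \<in> carrier D" if "a \<in> carrier Q" "b \<in> carrier Q" for a b
        using fE gE that by auto
      have "f (y, z) \<otimes>\<^bsub>D\<^esub> g (y, z) \<otimes>\<^bsub>D\<^esub> (f (x, y \<otimes>\<^bsub>Q\<^esub> z) \<otimes>\<^bsub>D\<^esub> g (x, y \<otimes>\<^bsub>Q\<^esub> z))
          = (f (y, z) \<otimes>\<^bsub>D\<^esub> f (x, y \<otimes>\<^bsub>Q\<^esub> z)) \<otimes>\<^bsub>D\<^esub> (g (y, z) \<otimes>\<^bsub>D\<^esub> g (x, y \<otimes>\<^bsub>Q\<^esub> z))"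
        using xyz c by (simp add: D.m_ac)
      also have "\<dots> = (f (x \<otimes>\<^bsub>Q\<^esub> y, z) \<otimes>\<^bsub>D\<^esub> f (x, y)) \<otimes>\<^bsub>D\<^esub> (g (x \<otimes>\<^bsub>Q\<^esub> y, z) \<otimes>\<^bsub>D\<^esub> g (x, y))"
        using fc gc xyz by simp
      also have "\<dots> = f (x \<otimes>\<^bsub>Q\<^esub> y, z) \<otimes>\<^bsub>D\<^esub> g (x \<otimes>\<^bsub>Q\<^esub> y, z) \<otimes>\<^bsub>D\<^esub> (f (x, y) \<otimes>\<^bsub>D\<^esub> g (x, y))"
        using xyz c by (simp add: D.m_ac)
      finally show "(\<lambda>p\<in>carrier Q \<times> carrier Q. f p \<otimes>\<^bsub>D\<^esub> g p) (y, z) \<otimes>\<^bsub>D\<^esub> (\<lambda>p\<in>carrier Q \<times> carrier Q. f p \<otimes>\<^bsub>D\<^esub> g p) (x, y \<otimes>\<^bsub>Q\<^esub> z) = (\<lambda>p\<in>carrier Q \<times> carrier Q. f p \<otimes>\<^bsub>D\<^esub> g p) (x \<otimes>\<^bsub>Q\<^esub> y, z) \<otimes>\<^bsub>D\<^esub> (\<lambda>p\<in>carrier Q \<times> carrier Q. f p \<otimes>\<^bsub>D\<^esub> g p) (x, y)"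
        using xyz by (simp add: Q.m_closed)
    qed
  next
    show "\<one>\<^bsub>cocycle_group Q D\<^esub> \<in> carrier (cocycle_group Q D)"
      by (auto simp: cocycle_group_def cocycles2_def)
  next
    fix f g h assume "f \<in> carrier (cocycle_group Q D)" "g \<in> carrier (cocycle_group Q D)" "h \<in> carrier (cocycle_group Q D)"
    hence "f \<in> carrier Q \<times> carrier Q \<rightarrow>\<^sub>E carrier D" "g \<in> carrier Q \<times> carrier Q \<rightarrow>\<^sub>E carrier D" "h \<in> carrier Q \<times> carrier Q \<rightarrow>\<^sub>E carrier D"
      by (auto simp: cocycle_group_def cocycles2_def)
    thus "f \<otimes>\<^bsub>cocycle_group Q D\<^esub> g \<otimes>\<^bsub>cocycle_group Q D\<^esub> h = f \<otimes>\<^bsub>cocycle_group Q D\<^esub> (g \<otimes>\<^bsub>cocycle_group Q D\<^esub> h)"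
      by (auto simp: cocycle_group_def restrict_def fun_eq_iff intro!: D.m_assoc)
  next
    fix f g assume "f \<in> carrier (cocycle_group Q D)" "g \<in> carrier (cocycle_group Q D)"
    hence "f \<in> carrier Q \<times> carrier Q \<rightarrow>\<^sub>E carrier D" "g \<in> carrier Q \<times> carrier Q \<rightarrow>\<^sub>E carrier D"
      by (auto simp: cocycle_group_def cocycles2_def)
    thus "f \<otimes>\<^bsub>cocycle_group Q D\<^esub> g = g \<otimes>\<^bsub>cocycle_group Q D\<^esub> f"
      by (auto simp: cocycle_group_def restrict_def fun_eq_iff intro!: D.m_comm)
  next
    fix f assume "f \<in> carrier (cocycle_group Q D)"
    hence "f \<in> carrier Q \<times> carrier Q \<rightarrow>\<^sub>E carrier D"
      by (auto simp: cocycle_group_def cocycles2_def)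
    thus "\<one>\<^bsub>cocycle_group Q D\<^esub> \<otimes>\<^bsub>cocycle_group Q D\<^esub> f = f"
      by (auto simp: cocycle_group_def restrict_def fun_eq_iff PiE_def extensional_def intro!: D.l_one)
  next
    fix f assume f: "f \<in> carrier (cocycle_group Q D)"
    have fE: "f \<in> carrier Q \<times> carrier Q \<rightarrow>\<^sub>E carrier D"
      using f by (auto simp: cocycle_group_def cocycles2_def)
    have fc: "\<And>x y z. x \<in> carrier Q \<Longrightarrow> y \<in> carrier Q \<Longrightarrow> z \<in> carrier Q \<Longrightarrow>
        f (y, z) \<otimes>\<^bsub>D\<^esub> f (x, y \<otimes>\<^bsub>Q\<^esub> z) = f (x \<otimes>\<^bsub>Q\<^esub> y, z) \<otimes>\<^bsub>D\<^esub> f (x, y)"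
      using f by (auto simp: cocycle_group_def cocycles2_def)
    define g where "g = restrict (\<lambda>p. inv\<^bsub>D\<^esub> f p) (carrier Q \<times> carrier Q)"
    have c: "f (a, b) \<in> carrier D" if "a \<in> carrier Q" "b \<in> carrier Q" for a b
      using fE that by auto
    have "g \<in> carrier (cocycle_group Q D)"
      unfolding cocycle_group_def cocycles2_def
    proof (simp only: partial_object.simps monoid.simps mem_Collect_eq, intro conjI ballI)
      show "g \<in> carrier Q \<times> carrier Q \<rightarrow>\<^sub>E carrier D" using fE by (auto simp: g_def)
    next
      fix x y z assume xyz: "x \<in> carrier Q" "y \<in> carrier Q" "z \<in> carrier Q"
      have "inv\<^bsub>D\<^esub> f (y, z) \<otimes>\<^bsub>D\<^esub> inv\<^bsub>D\<^esub> f (x, y \<otimes>\<^bsub>Q\<^esub> z) = inv\<^bsub>D\<^esub> (f (y, z) \<otimes>\<^bsub>D\<^esub> f (x, y \<otimes>\<^bsub>Q\<^esub> z))"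
        using xyz c by (simp add: D.inv_mult)
      also have "\<dots> = inv\<^bsub>D\<^esub> (f (x \<otimes>\<^bsub>Q\<^esub> y, z) \<otimes>\<^bsub>D\<^esub> f (x, y))" using fc xyz by simp
      also have "\<dots> = inv\<^bsub>D\<^esub> f (x \<otimes>\<^bsub>Q\<^esub> y, z) \<otimes>\<^bsub>D\<^esub> inv\<^bsub>D\<^esub> f (x, y)"
        using xyz c by (simp add: D.inv_mult)
      finally show "g (y, z) \<otimes>\<^bsub>D\<^esub> g (x, y \<otimes>\<^bsub>Q\<^esub> z) = g (x \<otimes>\<^bsub>Q\<^esub> y, z) \<otimes>\<^bsub>D\<^esub> g (x, y)"
        using xyz by (simp add: g_def)
    qed
    moreover have "g \<otimes>\<^bsub>cocycle_group Q D\<^esub> f = \<one>\<^bsub>cocycle_group Q D\<^esub>"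
      using fE by (auto simp: cocycle_group_def g_def restrict_def fun_eq_iff intro!: D.l_inv)
    ultimately show "\<exists>y\<in>carrier (cocycle_group Q D). y \<otimes>\<^bsub>cocycle_group Q D\<^esub> f = \<one>\<^bsub>cocycle_group Q D\<^esub>"
      by blast
  qed
qed


definition cob :: "('a, 'c) monoid_scheme \<Rightarrow> ('d, 'n) monoid_scheme \<Rightarrow> ('a \<Rightarrow> 'd) \<Rightarrow> ('a \<times> 'a \<Rightarrow> 'd)" where
  "cob Q D g = restrict (\<lambda>p. g (snd p) \<otimes>\<^bsub>D\<^esub> inv\<^bsub>D\<^esub> (g (fst p \<otimes>\<^bsub>Q\<^esub> snd p)) \<otimes>\<^bsub>D\<^esub> g (fst p))
                  (carrier Q \<times> carrier Q)"

lemma coboundaries2_cob: "coboundaries2 Q D = cob Q D ` (carrier Q \<rightarrow>\<^sub>E carrier D)"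
  unfolding coboundaries2_def cob_def by auto

lemma cob_in:
  assumes Q: "monoid Q" and D: "comm_group D" and g: "g \<in> carrier Q \<rightarrow>\<^sub>E carrier D"
  shows "cob Q D g \<in> carrier (cocycle_group Q D)"
proof -
  interpret Q: monoid Q by (rule Q)
  interpret D: comm_group D by (rule D)
  have gc: "g x \<in> carrier D" if "x \<in> carrier Q" for x using g that by auto
  show ?thesis
    unfolding cocycle_group_def cocycles2_def
  proof (simp only: partial_object.simps monoid.simps mem_Collect_eq, intro conjI ballI)
    show "cob Q D g \<in> carrier Q \<times> carrier Q \<rightarrow>\<^sub>E carrier D"
      using gc by (auto simp: cob_def)
  next
    fix x y z assume xyz: "x \<in> carrier Q" "y \<in> carrier Q" "z \<in> carrier Q"
    have "cob Q D g (y, z) \<otimes>\<^bsub>D\<^esub> cob Q D g (x, y \<otimes>\<^bsub>Q\<^esub> z)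
       = g z \<otimes>\<^bsub>D\<^esub> inv\<^bsub>D\<^esub> g (y \<otimes>\<^bsub>Q\<^esub> z) \<otimes>\<^bsub>D\<^esub> g y \<otimes>\<^bsub>D\<^esub> (g (y \<otimes>\<^bsub>Q\<^esub> z) \<otimes>\<^bsub>D\<^esub> inv\<^bsub>D\<^esub> g (x \<otimes>\<^bsub>Q\<^esub> (y \<otimes>\<^bsub>Q\<^esub> z)) \<otimes>\<^bsub>D\<^esub> g x)"
      using xyz by (simp add: cob_def)
    also have "\<dots> = g z \<otimes>\<^bsub>D\<^esub> g y \<otimes>\<^bsub>D\<^esub> g x \<otimes>\<^bsub>D\<^esub> inv\<^bsub>D\<^esub> g (x \<otimes>\<^bsub>Q\<^esub> y \<otimes>\<^bsub>Q\<^esub> z)"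
      using xyz gc by (simp add: D.L1 Q.m_assoc)
    also have "\<dots> = g z \<otimes>\<^bsub>D\<^esub> inv\<^bsub>D\<^esub> g (x \<otimes>\<^bsub>Q\<^esub> y \<otimes>\<^bsub>Q\<^esub> z) \<otimes>\<^bsub>D\<^esub> g (x \<otimes>\<^bsub>Q\<^esub> y) \<otimes>\<^bsub>D\<^esub> (g y \<otimes>\<^bsub>D\<^esub> inv\<^bsub>D\<^esub> g (x \<otimes>\<^bsub>Q\<^esub> y) \<otimes>\<^bsub>D\<^esub> g x)"
      using xyz gc by (simp add: D.L2)
    also have "\<dots> = cob Q D g (x \<otimes>\<^bsub>Q\<^esub> y, z) \<otimes>\<^bsub>D\<^esub> cob Q D g (x, y)"
      using xyz by (simp add: cob_def)
    finally show "cob Q D g (y, z) \<otimes>\<^bsub>D\<^esub> cob Q D g (x, y \<otimes>\<^bsub>Q\<^esub> z) = cob Q D g (x \<otimes>\<^bsub>Q\<^esub> y, z) \<otimes>\<^bsub>D\<^esub> cob Q D g (x, y)" .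
  qed
qed

lemma cob_mult:
  assumes Q: "monoid Q" and D: "comm_group D" and g: "g \<in> carrier Q \<rightarrow>\<^sub>E carrier D" and h: "h \<in> carrier Q \<rightarrow>\<^sub>E carrier D"
  shows "cob Q D g \<otimes>\<^bsub>cocycle_group Q D\<^esub> cob Q D h = cob Q D (\<lambda>x\<in>carrier Q. g x \<otimes>\<^bsub>D\<^esub> h x)"
proof -
  interpret Q: monoid Q by (rule Q)
  interpret D: comm_group D by (rule D)
  have gc: "g x \<in> carrier D" "h x \<in> carrier D" if "x \<in> carrier Q" for x using g h that by auto
  show ?thesis
    by (auto simp: cocycle_group_def cob_def fun_eq_iff gc D.L3)
qed

lemma cob_one:
  assumes Q: "monoid Q" and D: "comm_group D"
  shows "cob Q D (\<lambda>x\<in>carrier Q. \<one>\<^bsub>D\<^esub>) = \<one>\<^bsub>cocycle_group Q D\<^esub>"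
proof -
  interpret Q: monoid Q by (rule Q)
  interpret D: comm_group D by (rule D)
  show ?thesis by (auto simp: cocycle_group_def cob_def fun_eq_iff)
qed

lemma cob_subgroup:
  assumes Q: "monoid Q" and D: "comm_group D"
  shows "subgroup (coboundaries2 Q D) (cocycle_group Q D)"
proof -
  interpret Q: monoid Q by (rule Q)
  interpret D: comm_group D by (rule D)
  interpret C: comm_group "cocycle_group Q D" by (rule cocycle_group_comm[OF Q D])
  show ?thesis
  proof (rule C.subgroupI)
    show "coboundaries2 Q D \<subseteq> carrier (cocycle_group Q D)"
      unfolding coboundaries2_cob using cob_in[OF Q D] by auto
  next
    have "(\<lambda>x\<in>carrier Q. \<one>\<^bsub>D\<^esub>) \<in> carrier Q \<rightarrow>\<^sub>E carrier D" by auto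
    thus "coboundaries2 Q D \<noteq> {}" unfolding coboundaries2_cob by blast
  next
    fix a assume "a \<in> coboundaries2 Q D"
    then obtain g where g: "g \<in> carrier Q \<rightarrow>\<^sub>E carrier D" and a: "a = cob Q D g"
      unfolding coboundaries2_cob by auto
    define g' where "g' = (\<lambda>x\<in>carrier Q. inv\<^bsub>D\<^esub> g x)"
    have g': "g' \<in> carrier Q \<rightarrow>\<^sub>E carrier D" using g by (auto simp: g'_def)
    have "cob Q D g' \<otimes>\<^bsub>cocycle_group Q D\<^esub> cob Q D g = cob Q D (\<lambda>x\<in>carrier Q. g' x \<otimes>\<^bsub>D\<^esub> g x)"
      by (rule cob_mult[OF Q D g' g])
    also have "(\<lambda>x\<in>carrier Q. g' x \<otimes>\<^bsub>D\<^esub> g x) = (\<lambda>x\<in>carrier Q. \<one>\<^bsub>D\<^esub>)"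
      using g by (auto simp: g'_def fun_eq_iff intro!: D.l_inv)
    also have "cob Q D \<dots> = \<one>\<^bsub>cocycle_group Q D\<^esub>" by (rule cob_one[OF Q D])
    finally have "inv\<^bsub>cocycle_group Q D\<^esub> cob Q D g = cob Q D g'"
      using cob_in[OF Q D g] cob_in[OF Q D g'] by (intro C.inv_equality)
    thus "inv\<^bsub>cocycle_group Q D\<^esub> a \<in> coboundaries2 Q D"
      unfolding a coboundaries2_cob using g' by auto
  next
    fix a b assume "a \<in> coboundaries2 Q D" "b \<in> coboundaries2 Q D"
    then obtain g h where g: "g \<in> carrier Q \<rightarrow>\<^sub>E carrier D" and a: "a = cob Q D g"
      and h: "h \<in> carrier Q \<rightarrow>\<^sub>E carrier D" and b: "b = cob Q D h"
      unfolding coboundaries2_cob by auto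
    have "(\<lambda>x\<in>carrier Q. g x \<otimes>\<^bsub>D\<^esub> h x) \<in> carrier Q \<rightarrow>\<^sub>E carrier D" using g h by auto
    thus "a \<otimes>\<^bsub>cocycle_group Q D\<^esub> b \<in> coboundaries2 Q D"
      unfolding a b cob_mult[OF Q D g h] coboundaries2_cob by auto
  qed
qed

lemma H2_group:
  assumes Q: "monoid Q" and D: "comm_group D"
  shows "group (H2 Q D)" "coboundaries2 Q D \<lhd> cocycle_group Q D"
proof -
  interpret C: comm_group "cocycle_group Q D" by (rule cocycle_group_comm[OF Q D])
  show N: "coboundaries2 Q D \<lhd> cocycle_group Q D"
    by (rule C.subgroup_imp_normal[OF cob_subgroup[OF Q D]])
  show "group (H2 Q D)" unfolding H2_def by (rule normal.factorgroup_is_group[OF N])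
qed



locale transg = P?: group P + D: comm_group D for P (structure) and D :: "('d, 'n) monoid_scheme" and Z +
  assumes Zn: "Z \<lhd> P"
    and Zc: "\<And>z h. z \<in> Z \<Longrightarrow> h \<in> carrier P \<Longrightarrow> z \<otimes> h = h \<otimes> z"
    and Zd: "Z \<subseteq> derived P (carrier P)"
begin

abbreviation "Q \<equiv> P Mod Z"

definition s where "s U = (SOME h. h \<in> carrier P \<and> U = Z #> h)"
definition c where "c U V = s U \<otimes> s V \<otimes> inv (s (U <#> V))"

interpretation N: normal Z P by (rule Zn)

lemma Zsub: "Z \<subseteq> carrier P" using N.subset .

lemma Qgroup: "group Q" by (rule N.factorgroup_is_group)

interpretation Qg: group Q by (rule Qgroup)

lemma s_prop: assumes "U \<in> carrier Q" shows "s U \<in> carrier P" "U = Z #> s U"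
proof -
  from assms obtain h where "h \<in> carrier P" "U = Z #> h"
    by (auto simp: FactGroup_def RCOSETS_def)
  hence "\<exists>h. h \<in> carrier P \<and> U = Z #> h" by blast
  from someI_ex[OF this] show "s U \<in> carrier P" "U = Z #> s U" unfolding s_def by auto
qed

lemma Q_mult: assumes "U \<in> carrier Q" "V \<in> carrier Q"
  shows "U \<otimes>\<^bsub>Q\<^esub> V = Z #> (s U \<otimes> s V)" "U <#> V = Z #> (s U \<otimes> s V)" "U <#> V \<in> carrier Q"
proof -
  show "U <#> V = Z #> (s U \<otimes> s V)"
    using s_prop[OF assms(1)] s_prop[OF assms(2)] N.rcos_sum by metis
  thus "U \<otimes>\<^bsub>Q\<^esub> V = Z #> (s U \<otimes> s V)" by simp
  show "U <#> V \<in> carrier Q"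
    using Qg.m_closed[OF assms] by simp
qed

lemma coset_mem: "x \<in> carrier P \<Longrightarrow> Z #> x \<in> carrier Q"
  by (auto simp: FactGroup_def RCOSETS_def)

lemma c_in: assumes "U \<in> carrier Q" "V \<in> carrier Q" shows "c U V \<in> Z"
proof -
  have sc: "s U \<otimes> s V \<in> carrier P" using s_prop assms by auto
  have "s U \<otimes> s V \<in> U <#> V" using Q_mult[OF assms] rcos_self[OF sc N.subgroup_axioms] by simp
  also have "U <#> V = Z #> s (U <#> V)" using s_prop(2)[OF Q_mult(3)[OF assms]] .
  finally show ?thesis unfolding c_def
    using N.rcos_module_imp[OF P.is_group s_prop(1)[OF Q_mult(3)[OF assms]]] by blast
qed

lemma c_eq: assumes "U \<in> carrier Q" "V \<in> carrier Q" shows "s U \<otimes> s V = c U V \<otimes> s (U <#> V)"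
  using s_prop[OF assms(1)] s_prop[OF assms(2)] s_prop[OF Q_mult(3)[OF assms]]
  by (simp add: c_def m_assoc)

lemma c_cocycle: assumes "U \<in> carrier Q" "V \<in> carrier Q" "W \<in> carrier Q"
  shows "c V W \<otimes> c U (V <#> W) = c (U <#> V) W \<otimes> c U V"
proof -
  have XY: "U <#> V \<in> carrier Q" and YW: "V <#> W \<in> carrier Q" using Q_mult assms by auto
  have XYW: "U <#> V <#> W = U <#> (V <#> W)"
    using Qg.m_assoc[OF assms] by simp
  have XYW': "U <#> V <#> W \<in> carrier Q" using Q_mult(3)[OF XY assms(3)] .
  note sp = s_prop(1)[OF assms(1)] s_prop(1)[OF assms(2)] s_prop(1)[OF assms(3)] s_prop(1)[OF XY]
     s_prop(1)[OF YW] s_prop(1)[OF XYW']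
  have cz: "c V W \<in> carrier P" "c U (V <#> W) \<in> carrier P" "c (U <#> V) W \<in> carrier P" "c U V \<in> carrier P"
    using c_in assms XY YW Zsub by blast+
  have "s U \<otimes> s V \<otimes> s W = c U V \<otimes> c (U <#> V) W \<otimes> s (U <#> V <#> W)"
    using c_eq[OF assms(1,2)] c_eq[OF XY assms(3)] sp cz by (simp add: m_assoc)
  moreover have "s U \<otimes> s V \<otimes> s W = c V W \<otimes> c U (V <#> W) \<otimes> s (U <#> V <#> W)"
  proof -
    have "s U \<otimes> s V \<otimes> s W = s U \<otimes> (c V W \<otimes> s (V <#> W))"
      using c_eq[OF assms(2,3)] sp by (simp add: m_assoc)
    also have "\<dots> = c V W \<otimes> (s U \<otimes> s (V <#> W))"
      using Zc[OF c_in[OF assms(2,3)] sp(1)] sp cz by (simp add: m_assoc[symmetric])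
    also have "\<dots> = c V W \<otimes> c U (V <#> W) \<otimes> s (U <#> V <#> W)"
      using c_eq[OF assms(1) YW] XYW sp cz by (simp add: m_assoc)
    finally show ?thesis .
  qed
  ultimately have "c V W \<otimes> c U (V <#> W) = c U V \<otimes> c (U <#> V) W"
    using sp cz by (metis m_closed r_cancel)
  also have "\<dots> = c (U <#> V) W \<otimes> c U V" using Zc[OF c_in[OF assms(1,2)] cz(3)] .
  finally show ?thesis .
qed


lemma D_L4: "a \<in> carrier D \<Longrightarrow> b \<in> carrier D \<Longrightarrow> c' \<in> carrier D \<Longrightarrow> e \<in> carrier D \<Longrightarrow> f \<in> carrier D \<Longrightarrow>
  a \<otimes>\<^bsub>D\<^esub> b \<otimes>\<^bsub>D\<^esub> (c' \<otimes>\<^bsub>D\<^esub> inv\<^bsub>D\<^esub> e \<otimes>\<^bsub>D\<^esub> f) \<otimes>\<^bsub>D\<^esub> e = a \<otimes>\<^bsub>D\<^esub> f \<otimes>\<^bsub>D\<^esub> (b \<otimes>\<^bsub>D\<^esub> c')"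
proof -
  assume *: "a \<in> carrier D" "b \<in> carrier D" "c' \<in> carrier D" "e \<in> carrier D" "f \<in> carrier D"
  have "a \<otimes>\<^bsub>D\<^esub> b \<otimes>\<^bsub>D\<^esub> (c' \<otimes>\<^bsub>D\<^esub> inv\<^bsub>D\<^esub> e \<otimes>\<^bsub>D\<^esub> f) \<otimes>\<^bsub>D\<^esub> e
      = (a \<otimes>\<^bsub>D\<^esub> f \<otimes>\<^bsub>D\<^esub> (b \<otimes>\<^bsub>D\<^esub> c')) \<otimes>\<^bsub>D\<^esub> (inv\<^bsub>D\<^esub> e \<otimes>\<^bsub>D\<^esub> e)"
    using * by (simp only: D.m_assoc D.m_comm D.m_lcomm D.inv_closed D.m_closed)
  also have "\<dots> = a \<otimes>\<^bsub>D\<^esub> f \<otimes>\<^bsub>D\<^esub> (b \<otimes>\<^bsub>D\<^esub> c')" using * by simp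
  finally show ?thesis .
qed

lemma D_comm_trivial: "a \<in> carrier D \<Longrightarrow> b \<in> carrier D \<Longrightarrow>
  a \<otimes>\<^bsub>D\<^esub> b \<otimes>\<^bsub>D\<^esub> inv\<^bsub>D\<^esub> a \<otimes>\<^bsub>D\<^esub> inv\<^bsub>D\<^esub> b = \<one>\<^bsub>D\<^esub>"
proof -
  assume *: "a \<in> carrier D" "b \<in> carrier D"
  have "a \<otimes>\<^bsub>D\<^esub> b \<otimes>\<^bsub>D\<^esub> inv\<^bsub>D\<^esub> a \<otimes>\<^bsub>D\<^esub> inv\<^bsub>D\<^esub> b
     = (a \<otimes>\<^bsub>D\<^esub> inv\<^bsub>D\<^esub> a) \<otimes>\<^bsub>D\<^esub> (b \<otimes>\<^bsub>D\<^esub> inv\<^bsub>D\<^esub> b)"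
    using * by (simp only: D.m_assoc D.m_comm D.m_lcomm D.inv_closed D.m_closed)
  also have "\<dots> = \<one>\<^bsub>D\<^esub>" using * by simp
  finally show ?thesis .
qed

lemma in_own_coset: assumes x: "x \<in> carrier P" shows "x \<otimes> inv (s (Z #> x)) \<in> Z"
proof -
  have "x \<in> Z #> x" by (rule rcos_self[OF x N.subgroup_axioms])
  also have "Z #> x = Z #> s (Z #> x)" by (rule s_prop(2)[OF coset_mem[OF x]])
  finally show ?thesis
    using N.rcos_module_imp[OF P.is_group s_prop(1)[OF coset_mem[OF x]]] by blast
qed

lemma core:
  assumes hc: "h \<in> Z \<rightarrow> carrier D"
    and hm: "\<And>a b. a \<in> Z \<Longrightarrow> b \<in> Z \<Longrightarrow> h (a \<otimes> b) = h a \<otimes>\<^bsub>D\<^esub> h b"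
    and g: "g \<in> carrier Q \<rightarrow> carrier D"
    and hg: "\<And>U V. U \<in> carrier Q \<Longrightarrow> V \<in> carrier Q \<Longrightarrow> h (c U V) = g V \<otimes>\<^bsub>D\<^esub> inv\<^bsub>D\<^esub> g (U <#> V) \<otimes>\<^bsub>D\<^esub> g U"
    and z: "z \<in> Z"
  shows "h z = \<one>\<^bsub>D\<^esub>"
proof -
  define F where "F x = h (x \<otimes> inv (s (Z #> x))) \<otimes>\<^bsub>D\<^esub> g (Z #> x)" for x
  have Fc: "F x \<in> carrier D" if "x \<in> carrier P" for x
    using hc g in_own_coset[OF that] coset_mem[OF that] by (auto simp: F_def)
  have Fm: "F (x \<otimes> y) = F x \<otimes>\<^bsub>D\<^esub> F y" if x: "x \<in> carrier P" and y: "y \<in> carrier P" for x y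
  proof -
    define U where "U = Z #> x"
    define V where "V = Z #> y"
    define a where "a = x \<otimes> inv (s U)"
    define b where "b = y \<otimes> inv (s V)"
    have U: "U \<in> carrier Q" and V: "V \<in> carrier Q" using coset_mem x y by (auto simp: U_def V_def)
    have a: "a \<in> Z" and b: "b \<in> Z" using in_own_coset x y by (auto simp: a_def b_def U_def V_def)
    have sU: "s U \<in> carrier P" and sV: "s V \<in> carrier P" using s_prop U V by auto
    have UV: "U <#> V \<in> carrier Q" using Q_mult(3)[OF U V] .
    have sUV: "s (U <#> V) \<in> carrier P" using s_prop(1)[OF UV] .
    have cUV: "c U V \<in> Z" using c_in[OF U V] .
    have ac: "a \<in> carrier P" "b \<in> carrier P" "c U V \<in> carrier P" using a b cUV Zsub by auto
    have xy: "Z #> (x \<otimes> y) = U <#> V" unfolding U_def V_def using N.rcos_sum[OF x y] by simp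
    have xa: "x = a \<otimes> s U" using x sU by (simp add: a_def m_assoc)
    have yb: "y = b \<otimes> s V" using y sV by (simp add: b_def m_assoc)
    have "a \<otimes> b \<otimes> c U V = a \<otimes> (b \<otimes> s U) \<otimes> s V \<otimes> inv (s (U <#> V))"
      using ac sU sV sUV by (simp add: c_def m_assoc)
    also have "\<dots> = a \<otimes> (s U \<otimes> b) \<otimes> s V \<otimes> inv (s (U <#> V))"
      using Zc[OF b sU] by simp
    also have "\<dots> = (x \<otimes> y) \<otimes> inv (s (Z #> (x \<otimes> y)))"
      using ac sU sV sUV xa yb xy by (simp add: m_assoc)
    finally have key: "(x \<otimes> y) \<otimes> inv (s (Z #> (x \<otimes> y))) = a \<otimes> b \<otimes> c U V" ..
    have "F (x \<otimes> y) = h (a \<otimes> b \<otimes> c U V) \<otimes>\<^bsub>D\<^esub> g (U <#> V)"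
      by (simp only: F_def xy key[unfolded xy])
    also have "\<dots> = h a \<otimes>\<^bsub>D\<^esub> h b \<otimes>\<^bsub>D\<^esub> (g V \<otimes>\<^bsub>D\<^esub> inv\<^bsub>D\<^esub> g (U <#> V) \<otimes>\<^bsub>D\<^esub> g U) \<otimes>\<^bsub>D\<^esub> g (U <#> V)"
      using hm a b cUV N.m_closed[OF a b] hg[OF U V] by simp
    also have "\<dots> = h a \<otimes>\<^bsub>D\<^esub> g U \<otimes>\<^bsub>D\<^esub> (h b \<otimes>\<^bsub>D\<^esub> g V)"
      using hc g a b U V UV by (intro D_L4) auto
    also have "\<dots> = F x \<otimes>\<^bsub>D\<^esub> F y"
      unfolding F_def a_def b_def U_def V_def by (simp add: D.m_assoc)
    finally show ?thesis .
  qed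
  have Fh: "F \<in> hom P D" using Fc Fm by (auto simp: hom_def)
  interpret FH: group_hom P D F
    by (rule group_hom.intro[OF P.group_axioms D.group_axioms]) (simp add: group_hom_axioms_def Fh)
  have "derived_set P (carrier P) \<subseteq> kernel P D F"
  proof
    fix w assume "w \<in> derived_set P (carrier P)"
    then obtain a1 a2 where a: "a1 \<in> carrier P" "a2 \<in> carrier P" "w = a1 \<otimes> a2 \<otimes> inv a1 \<otimes> inv a2" by auto
    have "F w = F a1 \<otimes>\<^bsub>D\<^esub> F a2 \<otimes>\<^bsub>D\<^esub> inv\<^bsub>D\<^esub> F a1 \<otimes>\<^bsub>D\<^esub> inv\<^bsub>D\<^esub> F a2"
      using a by simp
    also have "\<dots> = \<one>\<^bsub>D\<^esub>" using a Fc by (intro D_comm_trivial) auto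
    finally show "w \<in> kernel P D F" using a by (simp add: kernel_def)
  qed
  hence "derived P (carrier P) \<subseteq> kernel P D F"
    unfolding derived_def by (rule generate_subgroup_incl[OF _ FH.subgroup_kernel])
  hence Fz: "F z = \<one>\<^bsub>D\<^esub>" using z Zd by (auto simp: kernel_def)
  define w where "w = inv (s Z)"
  have Z1: "Z #> \<one> = Z" using Zsub by (rule coset_mult_one)
  have Zz: "Z #> z = Z" using N.rcos_const[OF P.is_group z] .
  have sZ: "s Z \<in> carrier P" using s_prop(1)[OF coset_mem[OF one_closed]] Z1 by simp
  have wZ: "w \<in> Z" using in_own_coset[OF one_closed] Z1 sZ by (simp add: w_def)
  have F1: "F \<one> = h w \<otimes>\<^bsub>D\<^esub> g Z" unfolding F_def w_def Z1 using Zsub s_prop(1)[OF coset_mem[OF one_closed]] Z1 by simp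
  have "F z = h z \<otimes>\<^bsub>D\<^esub> (h w \<otimes>\<^bsub>D\<^esub> g Z)"
    unfolding F_def Zz w_def[symmetric] using hm[OF z wZ] hc g z wZ coset_mem[OF one_closed] Z1
    by (auto intro!: D.m_assoc)
  hence "h z \<otimes>\<^bsub>D\<^esub> (h w \<otimes>\<^bsub>D\<^esub> g Z) = h w \<otimes>\<^bsub>D\<^esub> g Z" using Fz F1 FH.hom_one by simp
  moreover have "h w \<otimes>\<^bsub>D\<^esub> g Z \<in> carrier D" "h z \<in> carrier D"
    using hc g wZ z coset_mem[OF one_closed] Z1 by auto
  ultimately show ?thesis by simp
qed


abbreviation "HG \<equiv> hom_group (P\<lparr>carrier := Z\<rparr>) D"

lemma HG_E: assumes "f \<in> carrier HG"
  shows "f \<in> Z \<rightarrow> carrier D" "\<And>a b. a \<in> Z \<Longrightarrow> b \<in> Z \<Longrightarrow> f (a \<otimes> b) = f a \<otimes>\<^bsub>D\<^esub> f b"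
    "f \<in> extensional Z"
  using assms by (auto simp: hom_group_def hom_def)

definition tr where "tr f = restrict (\<lambda>p. f (c (fst p) (snd p))) (carrier Q \<times> carrier Q)"

lemma Qmonoid: "monoid Q" using Qg.is_monoid .

lemma tr_in: assumes f: "f \<in> carrier HG" shows "tr f \<in> carrier (cocycle_group Q D)"
  unfolding cocycle_group_def cocycles2_def
proof (simp only: partial_object.simps monoid.simps mem_Collect_eq, intro conjI ballI)
  show "tr f \<in> carrier Q \<times> carrier Q \<rightarrow>\<^sub>E carrier D"
    using HG_E(1)[OF f] c_in by (auto simp: tr_def)
next
  fix U V W assume UVW: "U \<in> carrier Q" "V \<in> carrier Q" "W \<in> carrier Q"
  have "tr f (V, W) \<otimes>\<^bsub>D\<^esub> tr f (U, V \<otimes>\<^bsub>Q\<^esub> W) = f (c V W \<otimes> c U (V <#> W))"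
    using UVW Q_mult(3)[OF UVW(2,3)] c_in HG_E(2)[OF f] by (simp add: tr_def)
  also have "\<dots> = f (c (U <#> V) W \<otimes> c U V)" using c_cocycle[OF UVW] by simp
  also have "\<dots> = tr f (U \<otimes>\<^bsub>Q\<^esub> V, W) \<otimes>\<^bsub>D\<^esub> tr f (U, V)"
    using UVW Q_mult(3)[OF UVW(1,2)] c_in HG_E(2)[OF f] by (simp add: tr_def)
  finally show "tr f (V, W) \<otimes>\<^bsub>D\<^esub> tr f (U, V \<otimes>\<^bsub>Q\<^esub> W) = tr f (U \<otimes>\<^bsub>Q\<^esub> V, W) \<otimes>\<^bsub>D\<^esub> tr f (U, V)" .
qed

lemma tr_mult: assumes "f1 \<in> carrier HG" "f2 \<in> carrier HG"
  shows "tr (f1 \<otimes>\<^bsub>HG\<^esub> f2) = tr f1 \<otimes>\<^bsub>cocycle_group Q D\<^esub> tr f2"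
  using c_in by (auto simp: tr_def hom_group_def cocycle_group_def fun_eq_iff)

definition phi where "phi f = coboundaries2 Q D #>\<^bsub>cocycle_group Q D\<^esub> tr f"

lemma main_local: "phi \<in> hom HG (H2 Q D) \<and> inj_on phi (carrier HG)"
proof -
  interpret C: comm_group "cocycle_group Q D" by (rule cocycle_group_comm[OF Qmonoid D.comm_group_axioms])
  interpret B: normal "coboundaries2 Q D" "cocycle_group Q D" by (rule H2_group(2)[OF Qmonoid D.comm_group_axioms])
  have hom: "phi \<in> hom HG (H2 Q D)"
  proof (rule homI)
    fix f assume "f \<in> carrier HG"
    thus "phi f \<in> carrier (H2 Q D)"
      using tr_in by (auto simp: phi_def H2_def FactGroup_def RCOSETS_def)
  next
    fix f1 f2 assume f: "f1 \<in> carrier HG" "f2 \<in> carrier HG"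
    show "phi (f1 \<otimes>\<^bsub>HG\<^esub> f2) = phi f1 \<otimes>\<^bsub>H2 Q D\<^esub> phi f2"
      unfolding phi_def tr_mult[OF f] H2_def mult_FactGroup
      using B.rcos_sum[OF tr_in[OF f(1)] tr_in[OF f(2)]] by simp
  qed
  have inj: "inj_on phi (carrier HG)"
  proof (rule inj_onI)
    fix f1 f2 assume f1: "f1 \<in> carrier HG" and f2: "f2 \<in> carrier HG" and eq: "phi f1 = phi f2"
    have "tr f1 \<in> coboundaries2 Q D #>\<^bsub>cocycle_group Q D\<^esub> tr f1"
      by (rule C.rcos_self[OF tr_in[OF f1] B.subgroup_axioms])
    hence "tr f1 \<in> coboundaries2 Q D #>\<^bsub>cocycle_group Q D\<^esub> tr f2" using eq by (simp add: phi_def)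
    then obtain b where b: "b \<in> coboundaries2 Q D" and tb: "tr f1 = b \<otimes>\<^bsub>cocycle_group Q D\<^esub> tr f2"
      unfolding r_coset_def by auto
    then obtain g where g: "g \<in> carrier Q \<rightarrow>\<^sub>E carrier D" and bg: "b = cob Q D g"
      unfolding coboundaries2_cob by auto
    note f1E = HG_E[OF f1] and f2E = HG_E[OF f2]
    define h where "h z = f1 z \<otimes>\<^bsub>D\<^esub> inv\<^bsub>D\<^esub> f2 z" for z
    have hc: "h \<in> Z \<rightarrow> carrier D" using f1E(1) f2E(1) by (auto simp: h_def intro!: D.m_closed D.inv_closed)
    have hm: "h (a \<otimes> b) = h a \<otimes>\<^bsub>D\<^esub> h b" if "a \<in> Z" "b \<in> Z" for a b
    proof -
      have m: "f1 a \<in> carrier D" "f1 b \<in> carrier D" "f2 a \<in> carrier D" "f2 b \<in> carrier D"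
        using that f1E(1) f2E(1) by auto
      show ?thesis using that f1E(2) f2E(2) m by (simp add: h_def D.inv_mult D.m_ac)
    qed
    have hg: "h (c U V) = g V \<otimes>\<^bsub>D\<^esub> inv\<^bsub>D\<^esub> g (U <#> V) \<otimes>\<^bsub>D\<^esub> g U"
      if UV: "U \<in> carrier Q" "V \<in> carrier Q" for U V
    proof -
      have cz: "c U V \<in> Z" using c_in[OF UV] .
      have "tr f1 (U, V) = (b \<otimes>\<^bsub>cocycle_group Q D\<^esub> tr f2) (U, V)" using tb by simp
      hence "f1 (c U V) = (g V \<otimes>\<^bsub>D\<^esub> inv\<^bsub>D\<^esub> g (U <#> V) \<otimes>\<^bsub>D\<^esub> g U) \<otimes>\<^bsub>D\<^esub> f2 (c U V)"
        using UV by (simp add: tr_def bg cob_def cocycle_group_def)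
      moreover have "g V \<otimes>\<^bsub>D\<^esub> inv\<^bsub>D\<^esub> g (U <#> V) \<otimes>\<^bsub>D\<^esub> g U \<in> carrier D" "f2 (c U V) \<in> carrier D"
        using g UV Q_mult(3)[OF UV] f2E(1) cz by auto
      ultimately show ?thesis by (simp add: h_def D.m_assoc)
    qed
    have "f1 z = f2 z" for z
    proof (cases "z \<in> Z")
      case True
      have "h z = \<one>\<^bsub>D\<^esub>"
        by (rule core[OF hc hm _ hg True]) (use g in auto)
      moreover have "f1 z \<in> carrier D" "f2 z \<in> carrier D" using True f1E(1) f2E(1) by auto
      ultimately show ?thesis unfolding h_def by (metis D.inv_closed D.inv_equality D.inv_inv D.m_comm)
    next
      case False
      thus ?thesis using f1E(3) f2E(3) by (simp add: extensional_def)
    qed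
    thus "f1 = f2" by auto
  qed
  show ?thesis using hom inj by blast
qed

end

lemma central_normal:
  assumes P: "group P" and Z: "subgroup Z P"
    and c: "\<And>z x. z \<in> Z \<Longrightarrow> x \<in> carrier P \<Longrightarrow> x \<otimes>\<^bsub>P\<^esub> z = z \<otimes>\<^bsub>P\<^esub> x"
  shows "Z \<lhd> P"
proof -
  interpret P: group P by (rule P)
  show ?thesis
  proof (rule P.normal_invI[OF Z])
    fix x h assume x: "x \<in> carrier P" and h: "h \<in> Z"
    have hc: "h \<in> carrier P" using h subgroup.subset[OF Z] by auto
    have "x \<otimes>\<^bsub>P\<^esub> h \<otimes>\<^bsub>P\<^esub> inv\<^bsub>P\<^esub> x = h" using c[OF h x] x hc by (simp add: P.m_assoc)
    thus "x \<otimes>\<^bsub>P\<^esub> h \<otimes>\<^bsub>P\<^esub> inv\<^bsub>P\<^esub> x \<in> Z" using h by simp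
  qed
qed

theorem theorem3p7:
  fixes G :: "('g, 'm) monoid_scheme" and D :: "('d, 'n) monoid_scheme" and H K :: "'g set"
  assumes "group G"
    and "H \<lhd> G" and "K \<lhd> G"
    and "H <#>\<^bsub>G\<^esub> K = carrier G"
    and "\<forall>h \<in> H. \<forall>k \<in> K. h \<otimes>\<^bsub>G\<^esub> k = k \<otimes>\<^bsub>G\<^esub> h"
    and "divisible_group D"
  shows "let Z = derived G H \<inter> derived G K in
         \<exists>\<phi>. \<phi> \<in> hom (hom_group (G\<lparr>carrier := Z\<rparr>) D)
                     (H2 (G\<lparr>carrier := H\<rparr> Mod Z) D \<times>\<times> H2 (G\<lparr>carrier := K\<rparr> Mod Z) D)
           \<and> inj_on \<phi> (carrier (hom_group (G\<lparr>carrier := Z\<rparr>) D))"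
proof -
  interpret G: group G by (rule assms(1))
  have D: "comm_group D" using assms(6) by (simp add: divisible_group_def)
  define Z where "Z = derived G H \<inter> derived G K"
  have Hs: "subgroup H G" and Ks: "subgroup K G" using assms(2,3) normal_imp_subgroup by auto
  have dH: "derived G H \<subseteq> H" using G.derived_incl[OF _ Hs] by simp
  have dK: "derived G K \<subseteq> K" using G.derived_incl[OF _ Ks] by simp
  have ZH: "Z \<subseteq> H" and ZK: "Z \<subseteq> K" using dH dK by (auto simp: Z_def)
  have Zs: "subgroup Z G" unfolding Z_def
    using G.derived_is_subgroup subgroup.subset[OF Hs] subgroup.subset[OF Ks] G.subgroups_Inter_pair by metis
  have GH: "group (G\<lparr>carrier := H\<rparr>)" using G.subgroup_imp_group[OF Hs] .
  have GK: "group (G\<lparr>carrier := K\<rparr>)" using G.subgroup_imp_group[OF Ks] .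
  have ZnH: "Z \<lhd> G\<lparr>carrier := H\<rparr>"
    by (rule central_normal[OF GH G.subgroup_incl[OF Zs Hs ZH]]) (use ZK assms(5) in auto)
  have ZnK: "Z \<lhd> G\<lparr>carrier := K\<rparr>"
    by (rule central_normal[OF GK G.subgroup_incl[OF Zs Ks ZK]]) (use ZH assms(5) in force)
  interpret T: transg "G\<lparr>carrier := H\<rparr>" D Z
  proof (rule transg.intro)
    show "group (G\<lparr>carrier := H\<rparr>)" by (rule GH)
    show "comm_group D" by (rule D)
    show "transg_axioms (G\<lparr>carrier := H\<rparr>) Z"
    proof (rule transg_axioms.intro)
      show "Z \<lhd> G\<lparr>carrier := H\<rparr>" by (rule ZnH)
      show "\<And>z h. z \<in> Z \<Longrightarrow> h \<in> carrier (G\<lparr>carrier := H\<rparr>) \<Longrightarrow> z \<otimes>\<^bsub>G\<lparr>carrier := H\<rparr>\<^esub> h = h \<otimes>\<^bsub>G\<lparr>carrier := H\<rparr>\<^esub> z"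
        using ZK assms(5) by force
      show "Z \<subseteq> derived (G\<lparr>carrier := H\<rparr>) (carrier (G\<lparr>carrier := H\<rparr>))"
        using G.derived_consistent[OF _ Hs] by (auto simp: Z_def)
    qed
  qed
  have ml: "T.phi \<in> hom (hom_group (G\<lparr>carrier := Z\<rparr>) D) (H2 (G\<lparr>carrier := H\<rparr> Mod Z) D)"
    "inj_on T.phi (carrier (hom_group (G\<lparr>carrier := Z\<rparr>) D))"
    using T.main_local by auto
  have H2K: "group (H2 (G\<lparr>carrier := K\<rparr> Mod Z) D)"
    by (rule H2_group(1)[OF group.is_monoid[OF normal.factorgroup_is_group[OF ZnK]] D])
  define \<psi> where "\<psi> f = (T.phi f, \<one>\<^bsub>H2 (G\<lparr>carrier := K\<rparr> Mod Z) D\<^esub>)" for f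
  have "\<psi> \<in> hom (hom_group (G\<lparr>carrier := Z\<rparr>) D)
                     (H2 (G\<lparr>carrier := H\<rparr> Mod Z) D \<times>\<times> H2 (G\<lparr>carrier := K\<rparr> Mod Z) D)"
  proof (rule homI)
    fix f assume "f \<in> carrier (hom_group (G\<lparr>carrier := Z\<rparr>) D)"
    thus "\<psi> f \<in> carrier (H2 (G\<lparr>carrier := H\<rparr> Mod Z) D \<times>\<times> H2 (G\<lparr>carrier := K\<rparr> Mod Z) D)"
      using ml(1) monoid.one_closed[OF group.is_monoid[OF H2K]] by (auto simp: \<psi>_def hom_def)
  next
    fix f1 f2 assume "f1 \<in> carrier (hom_group (G\<lparr>carrier := Z\<rparr>) D)" "f2 \<in> carrier (hom_group (G\<lparr>carrier := Z\<rparr>) D)"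
    thus "\<psi> (f1 \<otimes>\<^bsub>hom_group (G\<lparr>carrier := Z\<rparr>) D\<^esub> f2) =
         \<psi> f1 \<otimes>\<^bsub>H2 (G\<lparr>carrier := H\<rparr> Mod Z) D \<times>\<times> H2 (G\<lparr>carrier := K\<rparr> Mod Z) D\<^esub> \<psi> f2"
      using ml(1) monoid.one_closed[OF group.is_monoid[OF H2K]] monoid.l_one[OF group.is_monoid[OF H2K]] by (simp add: \<psi>_def hom_def)
  qed
  moreover have "inj_on \<psi> (carrier (hom_group (G\<lparr>carrier := Z\<rparr>) D))"
    using ml(2) by (auto simp: inj_on_def \<psi>_def)
  ultimately show ?thesis unfolding Z_def[symmetric] Let_def by blast
qed

end
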